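(* For the iterates of the ROSS algorithm described in the context, with momentum coefficient $\alpha\in[0,1)$, define $\bar S^{[0]}=\bar x^{[0]}$ and $\bar S^{[t]}=\frac{1}{1-\alpha}\bar x^{[t]}-\frac{\alpha}{1-\alpha}\bar x^{[t-1]}$ for $t\ge1$. Then for every $T\ge1$, $$\sum_{t=1}^T\left\|\bar S^{[t]}-\bar x^{[t]}\right\|^2\le\frac{\gamma^2\alpha^2}{(1-\alpha)^4}\sum_{t=1}^T\left\|\frac1N\sum_{i=1}^N\bar g^{[t]}_i\right\|^2.$$
   Context: Setting: $N\ge1$ agents $\mathcal{N}=\{1,\dots,N\}$. $\mathbf{W}=(\omega_{i,j})\in[0,1]^{N\times N}$ is a symmetric doubly stochastic matrix ($\omega_{i,j}=\omega_{j,i}$, $\sum_{j}\omega_{i,j}=1$). $\mathcal{N}_i=\{j\in\mathcal{N}:\omega_{i,j}>0\}$ is the neighborhood of agent $i$ (the algorithm treats $i$ itself as a member of $\mathcal{N}_i$). Agent $i$ has a data distribution $\mathcal{D}_i$; $F(x;\xi)$ is a real-valued loss, differentiable in $x\in\mathbb{R}^d$. A finite validation set $\mathcal{Q}$ is available to every agent, and $J(\xi;x)$ denotes the accuracy of model $x$ on sample $\xi$. Algorithm ROSS (learning rate $\gamma>0$, momentum coefficient $\alpha$): all agents start from a common point $x_i^{[0]}=x^{[0]}$ with $u_i^{[0]}=0$. In each round $t=1,2,\dots$, each agent $i$ draws a sample $\xi_{i,t}\sim\mathcal{D}_i$ and for each $j\in\mathcal{N}_i$ computes $g^{[t]}_{i,j}=\nabla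 F(x^{[t-1]}_j;\xi_{i,t})$. Agent $i$ then sets $x^{[t]}_{i,j}=x^{[t-1]}_i-\gamma g^{[t]}_{j,i}$ for $j\in\mathcal{N}_i$; for $\mathcal{N}'\subseteq\mathcal{N}_i$ it defines $v(\mathcal{N}')=\frac{1}{|\mathcal{Q}|}\sum_{\xi\in\mathcal{Q}}J\big(\xi;\frac{1}{|\mathcal{N}'|}\sum_{j\in\mathcal{N}'}x^{[t]}_{i,j}\big)$ ($v(\emptyset)=0$); Shapley values $\varphi^{[t]}_{i,j}=\sum_{\mathcal{N}'\subseteq\mathcal{N}_i\setminus\{j\}}\frac{v(\mathcal{N}'\cup\{j\})-v(\mathcal{N}')}{|\mathcal{N}_i|\binom{|\mathcal{N}_i|-1}{|\mathcal{N}'|}}$; normalized values $\hat\varphi^{[t]}_{i,j}=\frac{\varphi^{[t]}_{i,j}-\min_{k\in\mathcal{N}_i}\varphi^{[t]}_{i,k}}{\max_{k\in\mathcal{N}_i}\varphi^{[t]}_{i,k}-\min_{k\in\mathcal{N}_i}\varphi^{[t]}_{i,k}}$; weights $\pi^{[t]}_{i,j}=\frac{\hat\varphi^{[t]}_{i,j}}{\omega_{i,j}\sum_{k\in\mathcal{N}_i}\hat\varphi^{[t]}_{i,k}}$; then $\bar g^{[t]}_i=\sum_{j\in\mathcal{N}_i}\pi^{[t]}_{i,j}g^{[t]}_{j,i}$, $\hat u^{[t]}_i=\alpha u^{[t-1]}_i+\bar g^{[t]}_i$, $\hat x^{[t]}_i=x^{[t-1]}_i-\gamma\hat u^{[t]}_i$,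 $u^{[t]}_i=\sum_{j\in\mathcal{N}_i}\omega_{i,j}\hat u^{[t]}_j$, $x^{[t]}_i=\sum_{j\in\mathcal{N}_i}\omega_{i,j}\hat x^{[t]}_j$. Write $\bar x^{[t]}=\frac1N\sum_{i=1}^N x^{[t]}_i$. *)

theory Defs
  imports "HOL-Analysis.Analysis"
begin

definition nbhd :: "('a \<Rightarrow> 'a \<Rightarrow> real) \<Rightarrow> 'a \<Rightarrow> 'a set" where
  "nbhd W i = {j. W i j > 0} \<union> {i}"

text \<open>Coalition value v(S): mean validation accuracy of the average of the models y j, j in S.\<close>
definition coal_val :: "'xi set \<Rightarrow> ('xi \<Rightarrow> 'v::real_vector \<Rightarrow> real) \<Rightarrow> ('a \<Rightarrow> 'v) \<Rightarrow> 'a set \<Rightarrow> real" where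
  "coal_val Q J y S = (if S = {} then 0 else
      (1 / real (card Q)) * (\<Sum>\<xi>\<in>Q. J \<xi> ((1 / real (card S)) *\<^sub>R (\<Sum>j\<in>S. y j))))"

definition shapley :: "('a set \<Rightarrow> real) \<Rightarrow> 'a set \<Rightarrow> 'a \<Rightarrow> real" where
  "shapley v M j = (\<Sum>S\<in>Pow (M - {j}).
      (v (insert j S) - v S) / (real (card M) * real ((card M - 1) choose (card S))))"

definition norm_shapley :: "('a \<Rightarrow> real) \<Rightarrow> 'a set \<Rightarrow> 'a \<Rightarrow> real" where
  "norm_shapley phi M j = (phi j - Min (phi ` M)) / (Max (phi ` M) - Min (phi ` M))"

text \<open>Local gradients at round t, given the iterates x of round t-1:
  ross_g gradF \<xi> t x i j = g^[t]_{i,j} = grad F(x_j; \<xi>_{i,t}).\<close>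
definition ross_g :: "('v \<Rightarrow> 'xi \<Rightarrow> 'v) \<Rightarrow> ('a \<Rightarrow> nat \<Rightarrow> 'xi) \<Rightarrow> nat \<Rightarrow> ('a \<Rightarrow> 'v) \<Rightarrow> 'a \<Rightarrow> 'a \<Rightarrow> 'v" where
  "ross_g gradF \<xi> t x i j = gradF (x j) (\<xi> i t)"

text \<open>Aggregated gradient \<open>gbar^[t]_i\<close> of agent i at round t, given the iterates x of round t-1.\<close>
definition ross_gbar ::
  "('a \<Rightarrow> 'a \<Rightarrow> real) \<Rightarrow> 'xi set \<Rightarrow> ('xi \<Rightarrow> 'v::real_vector \<Rightarrow> real) \<Rightarrow> ('v \<Rightarrow> 'xi \<Rightarrow> 'v)
    \<Rightarrow> real \<Rightarrow> ('a \<Rightarrow> nat \<Rightarrow> 'xi) \<Rightarrow> nat \<Rightarrow> ('a \<Rightarrow> 'v) \<Rightarrow> 'a \<Rightarrow> 'v" where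
  "ross_gbar W Q J gradF \<gamma> \<xi> t x i =
     (let g = ross_g gradF \<xi> t x;
          xloc = (\<lambda>j. x i - \<gamma> *\<^sub>R g j i);
          M = nbhd W i;
          phi = shapley (coal_val Q J xloc) M;
          phihat = norm_shapley phi M;
          pi = (\<lambda>j. phihat j / (W i j * (\<Sum>k\<in>M. phihat k)))
      in \<Sum>j\<in>M. pi j *\<^sub>R g j i)"

definition ross_step ::
  "('a \<Rightarrow> 'a \<Rightarrow> real) \<Rightarrow> 'xi set \<Rightarrow> ('xi \<Rightarrow> 'v::real_vector \<Rightarrow> real) \<Rightarrow> ('v \<Rightarrow> 'xi \<Rightarrow> 'v)
    \<Rightarrow> real \<Rightarrow> real \<Rightarrow> ('a \<Rightarrow> nat \<Rightarrow> 'xi) \<Rightarrow> nat \<Rightarrow> ('a \<Rightarrow> 'v) \<times> ('a \<Rightarrow> 'v) \<Rightarrow> ('a \<Rightarrow> 'v) \<times> ('a \<Rightarrow> 'v)" where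
  "ross_step W Q J gradF \<gamma> \<alpha> \<xi> t st =
     (let x = fst st; u = snd st;
          uhat = (\<lambda>i. \<alpha> *\<^sub>R u i + ross_gbar W Q J gradF \<gamma> \<xi> t x i);
          xhat = (\<lambda>i. x i - \<gamma> *\<^sub>R uhat i)
      in ((\<lambda>i. \<Sum>j\<in>nbhd W i. W i j *\<^sub>R xhat j),
          (\<lambda>i. \<Sum>j\<in>nbhd W i. W i j *\<^sub>R uhat j)))"

fun ross ::
  "('a \<Rightarrow> 'a \<Rightarrow> real) \<Rightarrow> 'xi set \<Rightarrow> ('xi \<Rightarrow> 'v::real_vector \<Rightarrow> real) \<Rightarrow> ('v \<Rightarrow> 'xi \<Rightarrow> 'v)
    \<Rightarrow> real \<Rightarrow> real \<Rightarrow> ('a \<Rightarrow> nat \<Rightarrow> 'xi) \<Rightarrow> 'v \<Rightarrow> nat \<Rightarrow> ('a \<Rightarrow> 'v) \<times> ('a \<Rightarrow> 'v)" where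
  "ross W Q J gradF \<gamma> \<alpha> \<xi> x0 0 = ((\<lambda>i. x0), (\<lambda>i. 0))"
| "ross W Q J gradF \<gamma> \<alpha> \<xi> x0 (Suc t) =
     ross_step W Q J gradF \<gamma> \<alpha> \<xi> (Suc t) (ross W Q J gradF \<gamma> \<alpha> \<xi> x0 t)"

end

theory Submission
  imports Defs
begin

lemma mix_sum:
  fixes W :: "'a::finite \<Rightarrow> 'a \<Rightarrow> real" and h :: "'a \<Rightarrow> 'v::real_vector"
  assumes W_range: "\<And>i j. 0 \<le> W i j \<and> W i j \<le> 1"
    and W_cols: "\<And>j. (\<Sum>i\<in>UNIV. W i j) = 1"
  shows "(\<Sum>i\<in>UNIV. \<Sum>j\<in>nbhd W i. W i j *\<^sub>R h j) = (\<Sum>j\<in>UNIV. h j)"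
proof -
  have "\<And>i. (\<Sum>j\<in>nbhd W i. W i j *\<^sub>R h j) = (\<Sum>j\<in>UNIV. W i j *\<^sub>R h j)"
  proof -
    fix i
    show "(\<Sum>j\<in>nbhd W i. W i j *\<^sub>R h j) = (\<Sum>j\<in>UNIV. W i j *\<^sub>R h j)"
    proof (rule sum.mono_neutral_left)
      show "\<forall>j\<in>UNIV - nbhd W i. W i j *\<^sub>R h j = 0"
      proof
        fix j assume "j \<in> UNIV - nbhd W i"
        then have "\<not> W i j > 0" by (auto simp: nbhd_def)
        with W_range[of i j] have "W i j = 0" by linarith
        then show "W i j *\<^sub>R h j = 0" by simp
      qed
    qed auto
  qed
  then have "(\<Sum>i\<in>UNIV. \<Sum>j\<in>nbhd W i. W i j *\<^sub>R h j) = (\<Sum>i\<in>UNIV. \<Sum>j\<in>UNIV. W i j *\<^sub>R h j)"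
    by simp
  also have "\<dots> = (\<Sum>j\<in>UNIV. \<Sum>i\<in>UNIV. W i j *\<^sub>R h j)" by (rule sum.swap)
  also have "\<dots> = (\<Sum>j\<in>UNIV. (\<Sum>i\<in>UNIV. W i j) *\<^sub>R h j)" by (simp add: scaleR_sum_left)
  also have "\<dots> = (\<Sum>j\<in>UNIV. h j)" by (simp add: W_cols)
  finally show ?thesis .
qed

lemma sq_ineq:
  fixes a b :: "'v::real_normed_vector" and \<alpha> :: real
  assumes "0 \<le> \<alpha>" "\<alpha> < 1"
  shows "(norm (\<alpha> *\<^sub>R a + b))\<^sup>2 \<le> \<alpha> * (norm a)\<^sup>2 + (norm b)\<^sup>2 / (1 - \<alpha>)"
proof -
  let ?x = "norm a" and ?y = "norm b"
  have "norm (\<alpha> *\<^sub>R a + b) \<le> \<alpha> * ?x + ?y"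
    using norm_triangle_ineq[of "\<alpha> *\<^sub>R a" b] assms by simp
  then have "(norm (\<alpha> *\<^sub>R a + b))\<^sup>2 \<le> (\<alpha> * ?x + ?y)\<^sup>2"
    by (simp add: power_mono)
  also have "\<dots> \<le> \<alpha> * ?x\<^sup>2 + ?y\<^sup>2 / (1 - \<alpha>)"
  proof -
    have "0 \<le> \<alpha> / (1 - \<alpha>) * ((1 - \<alpha>) * ?x - ?y)\<^sup>2" using assms by simp
    moreover have "\<alpha> * ?x\<^sup>2 + ?y\<^sup>2 / (1 - \<alpha>) - (\<alpha> * ?x + ?y)\<^sup>2
        = \<alpha> / (1 - \<alpha>) * ((1 - \<alpha>) * ?x - ?y)\<^sup>2"
      using assms by (simp add: field_simps power2_eq_square)
    ultimately show ?thesis by linarith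
  qed
  finally show ?thesis .
qed

theorem lemma3:
  fixes W :: "'a::finite \<Rightarrow> 'a \<Rightarrow> real"
    and F :: "'v::euclidean_space \<Rightarrow> 'xi \<Rightarrow> real"
    and gradF :: "'v \<Rightarrow> 'xi \<Rightarrow> 'v"
    and Q :: "'xi set" and J :: "'xi \<Rightarrow> 'v \<Rightarrow> real"
    and \<gamma> \<alpha> :: real and \<xi> :: "'a \<Rightarrow> nat \<Rightarrow> 'xi" and x0 :: 'v and T :: nat
    and xbar Sbar :: "nat \<Rightarrow> 'v" and ggbar :: "nat \<Rightarrow> 'v"
  assumes W_range: "\<And>i j. 0 \<le> W i j \<and> W i j \<le> 1"
    and W_sym: "\<And>i j. W i j = W j i"
    and W_rows: "\<And>i. (\<Sum>j\<in>UNIV. W i j) = 1"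
    and W_cols: "\<And>j. (\<Sum>i\<in>UNIV. W i j) = 1"
    and grad: "\<And>x \<zeta>. ((\<lambda>y. F y \<zeta>) has_derivative (\<lambda>h. gradF x \<zeta> \<bullet> h)) (at x)"
    and Q_fin: "finite Q"
    and gamma_pos: "\<gamma> > 0"
    and alpha: "0 \<le> \<alpha>" "\<alpha> < 1"
    and T: "T \<ge> 1"
    and xbar_def: "\<And>t. xbar t = (1 / real CARD('a)) *\<^sub>R
                      (\<Sum>i\<in>UNIV. fst (ross W Q J gradF \<gamma> \<alpha> \<xi> x0 t) i)"
    and Sbar_def: "\<And>t. Sbar t = (if t = 0 then xbar 0
                      else (1 / (1 - \<alpha>)) *\<^sub>R xbar t - (\<alpha> / (1 - \<alpha>)) *\<^sub>R xbar (t - 1))"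
    and ggbar_def: "\<And>t. ggbar t = (1 / real CARD('a)) *\<^sub>R
                      (\<Sum>i\<in>UNIV. ross_gbar W Q J gradF \<gamma> \<xi> t
                                   (fst (ross W Q J gradF \<gamma> \<alpha> \<xi> x0 (t - 1))) i)"
  shows "(\<Sum>t=1..T. (norm (Sbar t - xbar t))\<^sup>2)
           \<le> \<gamma>\<^sup>2 * \<alpha>\<^sup>2 / (1 - \<alpha>)^4 * (\<Sum>t=1..T. (norm (ggbar t))\<^sup>2)"
proof -
  define st where "st = ross W Q J gradF \<gamma> \<alpha> \<xi> x0"
  define c where "c = 1 / real CARD('a)"
  define U where "U t = c *\<^sub>R (\<Sum>i\<in>UNIV. snd (st t) i)" for t
  define gb where "gb t = ross_gbar W Q J gradF \<gamma> \<xi> (Suc t) (fst (st t))" for t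
  have U0: "U 0 = 0" by (simp add: U_def st_def)
  have rec: "U (Suc t) = \<alpha> *\<^sub>R U t + ggbar (Suc t) \<and> xbar (Suc t) = xbar t - \<gamma> *\<^sub>R U (Suc t)" for t
  proof -
    have stS: "st (Suc t) = ross_step W Q J gradF \<gamma> \<alpha> \<xi> (Suc t) (st t)"
      by (simp add: st_def)
    have u: "(\<Sum>i\<in>UNIV. snd (st (Suc t)) i) = (\<Sum>j\<in>UNIV. \<alpha> *\<^sub>R snd (st t) j + gb t j)"
      unfolding stS ross_step_def Let_def gb_def
      by (simp add: mix_sum[OF W_range W_cols])
    have x: "(\<Sum>i\<in>UNIV. fst (st (Suc t)) i) = (\<Sum>j\<in>UNIV. fst (st t) j - \<gamma> *\<^sub>R (\<alpha> *\<^sub>R snd (st t) j + gb t j))"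
      unfolding stS ross_step_def Let_def gb_def
      by (simp add: mix_sum[OF W_range W_cols])
    have g: "ggbar (Suc t) = c *\<^sub>R (\<Sum>j\<in>UNIV. gb t j)"
      by (simp add: ggbar_def gb_def c_def st_def)
    have U1: "U (Suc t) = \<alpha> *\<^sub>R U t + ggbar (Suc t)"
      unfolding U_def u g by (simp add: sum.distrib scaleR_sum_right[symmetric] scaleR_right_distrib)
    have "xbar (Suc t) = c *\<^sub>R (\<Sum>j\<in>UNIV. fst (st t) j) - \<gamma> *\<^sub>R (\<alpha> *\<^sub>R U t + ggbar (Suc t))"
      unfolding xbar_def st_def[symmetric] c_def[symmetric] x g U_def
      by (simp add: sum.distrib sum_subtractf scaleR_sum_right[symmetric] scaleR_right_distrib
          scaleR_diff_right mult_ac)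
    then show ?thesis using U1 by (simp add: xbar_def st_def c_def)
  qed
  have SU: "norm (Sbar t - xbar t) ^ 2 = (\<gamma> * \<alpha> / (1 - \<alpha>))\<^sup>2 * (norm (U t))\<^sup>2" if t1: "t \<ge> 1" for t
  proof -
    obtain s where s: "t = Suc s" using t1 by (cases t) auto
    have "Sbar t - xbar t = (1 / (1 - \<alpha>)) *\<^sub>R xbar t - (\<alpha> / (1 - \<alpha>)) *\<^sub>R xbar s - xbar t"
      using Sbar_def[of t] s by simp
    also have "\<dots> = (\<alpha> / (1 - \<alpha>)) *\<^sub>R (xbar t - xbar s)"
    proof -
      have "(1 / (1 - \<alpha>)) = (\<alpha> / (1 - \<alpha>)) + 1" using alpha by (simp add: field_simps)
      then show ?thesis by (simp add: algebra_simps)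
    qed
    also have "\<dots> = - ((\<gamma> * \<alpha> / (1 - \<alpha>)) *\<^sub>R U t)"
      using rec[of s] s by simp
    finally have "Sbar t - xbar t = - ((\<gamma> * \<alpha> / (1 - \<alpha>)) *\<^sub>R U t)" .
    then show ?thesis by (simp only: norm_minus_cancel norm_scaleR power_mult_distrib power2_abs)
  qed
  have step: "(norm (U (Suc t)))\<^sup>2 \<le> \<alpha> * (norm (U t))\<^sup>2 + (norm (ggbar (Suc t)))\<^sup>2 / (1 - \<alpha>)" for t
    using rec[of t] sq_ineq[OF alpha] by simp
  have sumU: "(\<Sum>t=1..T. (norm (U t))\<^sup>2) \<le> (\<Sum>t=1..T. (norm (ggbar t))\<^sup>2) / (1 - \<alpha>)^2"
  proof -
    have A: "(\<Sum>t=1..T. (norm (U t))\<^sup>2) \<le> (\<Sum>t<T. \<alpha> * (norm (U t))\<^sup>2 + (norm (ggbar (Suc t)))\<^sup>2 / (1 - \<alpha>))"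
    proof -
      have "(\<Sum>t=1..T. (norm (U t))\<^sup>2) = (\<Sum>t<T. (norm (U (Suc t)))\<^sup>2)"
        by (simp add: sum.atLeast1_atMost_eq)
      also have "\<dots> \<le> (\<Sum>t<T. \<alpha> * (norm (U t))\<^sup>2 + (norm (ggbar (Suc t)))\<^sup>2 / (1 - \<alpha>))"
        by (rule sum_mono) (rule step)
      finally show ?thesis .
    qed
    have B: "(\<Sum>t<T. (norm (U t))\<^sup>2) \<le> (\<Sum>t=1..T. (norm (U t))\<^sup>2)"
    proof -
      obtain m where m: "T = Suc m" using T by (cases T) auto
      have "(\<Sum>t<T. (norm (U t))\<^sup>2) = (\<Sum>t<m. (norm (U (Suc t)))\<^sup>2)"
        unfolding m by (subst sum.lessThan_Suc_shift) (simp add: U0)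
      also have "\<dots> \<le> (\<Sum>t<T. (norm (U (Suc t)))\<^sup>2)"
        unfolding m by simp
      also have "\<dots> = (\<Sum>t=1..T. (norm (U t))\<^sup>2)"
        by (simp add: sum.atLeast1_atMost_eq)
      finally show ?thesis .
    qed
    have G: "(\<Sum>t<T. (norm (ggbar (Suc t)))\<^sup>2) = (\<Sum>t=1..T. (norm (ggbar t))\<^sup>2)"
      by (simp add: sum.atLeast1_atMost_eq)
    let ?S = "(\<Sum>t=1..T. (norm (U t))\<^sup>2)" and ?G = "(\<Sum>t=1..T. (norm (ggbar t))\<^sup>2)"
    have "?S \<le> \<alpha> * (\<Sum>t<T. (norm (U t))\<^sup>2) + ?G / (1 - \<alpha>)"
    proof -
      have "(\<Sum>t<T. \<alpha> * (norm (U t))\<^sup>2 + (norm (ggbar (Suc t)))\<^sup>2 / (1 - \<alpha>))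
          = \<alpha> * (\<Sum>t<T. (norm (U t))\<^sup>2) + (\<Sum>t<T. (norm (ggbar (Suc t)))\<^sup>2) / (1 - \<alpha>)"
        by (simp only: sum.distrib sum_distrib_left sum_divide_distrib)
      then show ?thesis using A G by simp
    qed
    also have "\<dots> \<le> \<alpha> * ?S + ?G / (1 - \<alpha>)"
      using B alpha by (simp add: mult_left_mono)
    finally have "(1 - \<alpha>) * ?S \<le> ?G / (1 - \<alpha>)" by (simp add: algebra_simps)
    then have "(1 - \<alpha>) * ((1 - \<alpha>) * ?S) \<le> ?G"
      using alpha by (simp add: pos_le_divide_eq mult.commute)
    then have "(1 - \<alpha>)^2 * ?S \<le> ?G" by (simp add: power2_eq_square mult.assoc)
    then show ?thesis using alpha by (simp add: pos_le_divide_eq mult.commute)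
  qed
  have "(\<Sum>t=1..T. (norm (Sbar t - xbar t))\<^sup>2) = (\<gamma> * \<alpha> / (1 - \<alpha>))\<^sup>2 * (\<Sum>t=1..T. (norm (U t))\<^sup>2)"
    by (simp add: SU sum_distrib_left)
  also have "\<dots> \<le> (\<gamma> * \<alpha> / (1 - \<alpha>))\<^sup>2 * ((\<Sum>t=1..T. (norm (ggbar t))\<^sup>2) / (1 - \<alpha>)^2)"
    by (rule mult_left_mono[OF sumU]) simp
  also have "\<dots> = \<gamma>\<^sup>2 * \<alpha>\<^sup>2 / (1 - \<alpha>)^4 * (\<Sum>t=1..T. (norm (ggbar t))\<^sup>2)"
  proof -
    have "(1 - \<alpha>)^4 = (1 - \<alpha>)\<^sup>2 * (1 - \<alpha>)\<^sup>2" by algebra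
    then show ?thesis by (simp add: power_mult_distrib power_divide)
  qed
  finally show ?thesis .
qed

end
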